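(* Let $\mathfrak g$ be a complex simple Lie algebra of rank $2$, with Cartan subalgebra $\mathfrak t$ and root system $\Phi_{\mathfrak g}$, and let $Q=\sum_{i=1}^pA_ix^i$ with $p\ge1$, $A_i\in\mathfrak t$, $A_p\ne0$. Then the pure local wild mapping class group $\Gamma_Q$ is isomorphic to $\mathbb Z$, to $\mathbb Z^2$, or to the pure $\mathfrak g$-braid group $\mathrm{PB}_{\mathfrak g}=\pi_1(\mathfrak t_{\mathrm{reg}})$, where $\mathfrak t_{\mathrm{reg}}=\mathfrak t\setminus\bigcup_{\alpha\in\Phi_{\mathfrak g}}\operatorname{Ker}(\alpha)$.
   Context: For $\alpha\in\Phi_{\mathfrak g}$ let $d_\alpha=\deg_x(\sum_i\alpha(A_i)x^i)$ with $\deg_x(0)=0$. Then $\mathbf B_Q=\{(A_1',\dots,A_p')\in\mathfrak t^p:\deg_x(\sum_i\alpha(A_i')x^i)=d_\alpha\ \forall\alpha\in\Phi_{\mathfrak g}\}$ and $\Gamma_Q=\pi_1(\mathbf B_Q,(A_1,\dots,A_p))$. *)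

theory Defs
  imports "HOL-Analysis.Analysis" "HOL-Algebra.Elementary_Groups"
    "HOL-Computational_Algebra.Polynomial"
begin

definition loops_at :: "'a::topological_space set \<Rightarrow> 'a \<Rightarrow> (real \<Rightarrow> 'a) set" where
  "loops_at S a = {p. path p \<and> path_image p \<subseteq> S \<and> pathstart p = a \<and> pathfinish p = a}"

definition path_class :: "'a::topological_space set \<Rightarrow> (real \<Rightarrow> 'a) \<Rightarrow> (real \<Rightarrow> 'a) set" where
  "path_class S p = {q. homotopic_paths S p q}"

definition fundamental_group :: "'a::topological_space set \<Rightarrow> 'a \<Rightarrow> (real \<Rightarrow> 'a) set monoid" where
  "fundamental_group S a =
     \<lparr>carrier = path_class S ` loops_at S a,
      monoid.mult = (\<lambda>X Y. path_class S ((SOME p. p \<in> X) +++ (SOME q. q \<in> Y))),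
      one = path_class S (\<lambda>t. a)\<rparr>"

text \<open>The Cartan subalgebra t of a complex simple Lie algebra of rank 2 is identified
 with complex * complex via z maps to (alpha1 z, alpha2 z), alpha1, alpha2 simple roots.
 A root is then recorded by its integer coordinates (a,b) w.r.t. the simple roots,
 acting as (z1,z2) maps to a z1 + b z2.  Complex simple Lie algebras of rank 2 are exactly
 those of type A2, B2 (= C2), G2.\<close>

datatype rank2_type = A2 | B2 | G2

definition pos_roots :: "rank2_type \<Rightarrow> (int \<times> int) set" where
  "pos_roots g = (case g of
      A2 \<Rightarrow> {(1,0), (0,1), (1,1)}
    | B2 \<Rightarrow> {(1,0), (0,1), (1,1), (1,2)}
    | G2 \<Rightarrow> {(1,0), (0,1), (1,1), (2,1), (3,1), (3,2)})"

definition roots :: "rank2_type \<Rightarrow> (int \<times> int) set" where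
  "roots g = pos_roots g \<union> (\<lambda>(a,b). (-a,-b)) ` pos_roots g"

definition root_eval :: "int \<times> int \<Rightarrow> complex \<times> complex \<Rightarrow> complex" where
  "root_eval \<alpha> z = of_int (fst \<alpha>) * fst z + of_int (snd \<alpha>) * snd z"

definition t_reg :: "rank2_type \<Rightarrow> (complex \<times> complex) set" where
  "t_reg g = {z. \<forall>\<alpha>\<in>roots g. root_eval \<alpha> z \<noteq> 0}"

text \<open>Tuples (A_1,...,A_p) in t^p are represented as functions nat => t vanishing
 outside {1..p}; the subspace topology of the product topology is that of t^p.\<close>

definition alpha_poly :: "int \<times> int \<Rightarrow> nat \<Rightarrow> (nat \<Rightarrow> complex \<times> complex) \<Rightarrow> complex poly" where
  "alpha_poly \<alpha> p A = (\<Sum>i\<in>{1..p}. monom (root_eval \<alpha> (A i)) i)"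

definition B_Q :: "rank2_type \<Rightarrow> nat \<Rightarrow> (nat \<Rightarrow> complex \<times> complex) \<Rightarrow> (nat \<Rightarrow> complex \<times> complex) set" where
  "B_Q g p A = {A'. (\<forall>i. i \<notin> {1..p} \<longrightarrow> A' i = 0) \<and>
      (\<forall>\<alpha>\<in>roots g. degree (alpha_poly \<alpha> p A') = degree (alpha_poly \<alpha> p A))}"

definition Gamma_Q :: "rank2_type \<Rightarrow> nat \<Rightarrow> (nat \<Rightarrow> complex \<times> complex) \<Rightarrow> _" where
  "Gamma_Q g p A = fundamental_group (B_Q g p A) A"

end

theory Submission
  imports Defs "HOL-Complex_Analysis.Complex_Analysis"
begin



lemma homotopic_paths_class_eq:
  "homotopic_paths S p q \<Longrightarrow> path_class S p = path_class S q"
proof -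
  assume h: "homotopic_paths S p q"
  have "homotopic_paths S p r \<longleftrightarrow> homotopic_paths S q r" for r
  proof
    assume "homotopic_paths S p r"
    then show "homotopic_paths S q r" by (rule homotopic_paths_trans[OF homotopic_paths_sym[OF h]])
  next
    assume "homotopic_paths S q r"
    then show "homotopic_paths S p r" by (rule homotopic_paths_trans[OF h])
  qed
  then have "homotopic_paths S p = homotopic_paths S q" by (intro ext)
  then show ?thesis unfolding path_class_def by simp
qed

lemma loops_at_homotopic:
  assumes "\<gamma> \<in> loops_at S b" "homotopic_paths S \<gamma> \<delta>"
  shows "\<delta> \<in> loops_at S b"
  using assms(1) homotopic_paths_imp_path[OF assms(2)] homotopic_paths_imp_subset[OF assms(2)]
    homotopic_paths_imp_pathstart[OF assms(2)] homotopic_paths_imp_pathfinish[OF assms(2)]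
  unfolding loops_at_def by simp

lemma some_in_class:
  assumes "\<gamma> \<in> loops_at S b"
  shows "(SOME q. q \<in> path_class S \<gamma>) \<in> loops_at S b \<and> homotopic_paths S \<gamma> (SOME q. q \<in> path_class S \<gamma>)"
proof -
  have "\<gamma> \<in> path_class S \<gamma>" using assms by (auto simp: path_class_def loops_at_def)
  then have "(SOME q. q \<in> path_class S \<gamma>) \<in> path_class S \<gamma>" by (rule someI[of "\<lambda>q. q \<in> path_class S \<gamma>"])
  then have h: "homotopic_paths S \<gamma> (SOME q. q \<in> path_class S \<gamma>)" by (simp add: path_class_def)
  then show ?thesis using loops_at_homotopic[OF assms h] by blast
qed

lemma loops_at_join: "\<gamma>1 \<in> loops_at S b \<Longrightarrow> \<gamma>2 \<in> loops_at S b \<Longrightarrow> \<gamma>1 +++ \<gamma>2 \<in> loops_at S b"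
  using path_join_imp[of \<gamma>1 \<gamma>2] path_image_join_subset[of \<gamma>1 \<gamma>2]
  unfolding loops_at_def by auto

lemma fg_iso:
  fixes S :: "'a::topological_space set" and H :: "('g,'m) monoid_scheme"
  assumes inH: "\<And>\<gamma>. \<gamma> \<in> loops_at S b \<Longrightarrow> \<Phi> \<gamma> \<in> carrier H"
    and hiff: "\<And>\<gamma>1 \<gamma>2. \<gamma>1 \<in> loops_at S b \<Longrightarrow> \<gamma>2 \<in> loops_at S b \<Longrightarrow>
               homotopic_paths S \<gamma>1 \<gamma>2 \<longleftrightarrow> \<Phi> \<gamma>1 = \<Phi> \<gamma>2"
    and mult: "\<And>\<gamma>1 \<gamma>2. \<gamma>1 \<in> loops_at S b \<Longrightarrow> \<gamma>2 \<in> loops_at S b \<Longrightarrow>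
               \<Phi> (\<gamma>1 +++ \<gamma>2) = \<Phi> \<gamma>1 \<otimes>\<^bsub>H\<^esub> \<Phi> \<gamma>2"
    and surj: "\<And>h. h \<in> carrier H \<Longrightarrow> \<exists>\<gamma>\<in>loops_at S b. \<Phi> \<gamma> = h"
  shows "fundamental_group S b \<cong> H"
proof -
  define f where "f X = \<Phi> (SOME q. q \<in> X)" for X
  have fval: "f (path_class S \<gamma>) = \<Phi> \<gamma>" if "\<gamma> \<in> loops_at S b" for \<gamma>
    using some_in_class[OF that] hiff[OF that] unfolding f_def by auto
  have carr: "carrier (fundamental_group S b) = path_class S ` loops_at S b"
    by (simp add: fundamental_group_def)
  have hom: "f \<in> hom (fundamental_group S b) H"
  proof (rule homI)
    fix X assume "X \<in> carrier (fundamental_group S b)"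
    then obtain \<gamma> where "\<gamma> \<in> loops_at S b" "X = path_class S \<gamma>" by (auto simp: carr)
    then show "f X \<in> carrier H" using fval inH by auto
  next
    fix X Y assume "X \<in> carrier (fundamental_group S b)" "Y \<in> carrier (fundamental_group S b)"
    then obtain \<gamma> \<delta> where g: "\<gamma> \<in> loops_at S b" "X = path_class S \<gamma>"
      and d: "\<delta> \<in> loops_at S b" "Y = path_class S \<delta>" by (auto simp: carr)
    let ?p = "SOME q. q \<in> path_class S \<gamma>" and ?q = "SOME q. q \<in> path_class S \<delta>"
    have p: "?p \<in> loops_at S b" "homotopic_paths S \<gamma> ?p" using some_in_class[OF g(1)] by auto
    have q: "?q \<in> loops_at S b" "homotopic_paths S \<delta> ?q" using some_in_class[OF d(1)] by auto
    have "X \<otimes>\<^bsub>fundamental_group S b\<^esub> Y = path_class S (?p +++ ?q)"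
      using g d by (simp add: fundamental_group_def)
    then have "f (X \<otimes>\<^bsub>fundamental_group S b\<^esub> Y) = \<Phi> (?p +++ ?q)"
      using fval[OF loops_at_join[OF p(1) q(1)]] by simp
    also have "\<dots> = \<Phi> ?p \<otimes>\<^bsub>H\<^esub> \<Phi> ?q" using mult p q by simp
    also have "\<Phi> ?p = \<Phi> \<gamma>" using hiff[OF g(1) p(1)] p(2) by simp
    also have "\<Phi> ?q = \<Phi> \<delta>" using hiff[OF d(1) q(1)] q(2) by simp
    finally show "f (X \<otimes>\<^bsub>fundamental_group S b\<^esub> Y) = f X \<otimes>\<^bsub>H\<^esub> f Y"
      using fval g d by simp
  qed
  have inj: "inj_on f (carrier (fundamental_group S b))"
  proof (rule inj_onI)
    fix X Y assume "X \<in> carrier (fundamental_group S b)" "Y \<in> carrier (fundamental_group S b)"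
      and e: "f X = f Y"
    then obtain \<gamma> \<delta> where g: "\<gamma> \<in> loops_at S b" "X = path_class S \<gamma>"
      and d: "\<delta> \<in> loops_at S b" "Y = path_class S \<delta>" by (auto simp: carr)
    then have "\<Phi> \<gamma> = \<Phi> \<delta>" using e fval by simp
    then have "homotopic_paths S \<gamma> \<delta>" using hiff g d by simp
    then show "X = Y" using g d homotopic_paths_class_eq by simp
  qed
  have img: "f ` carrier (fundamental_group S b) = carrier H"
  proof
    show "f ` carrier (fundamental_group S b) \<subseteq> carrier H"
      using hom unfolding hom_def by blast
    show "carrier H \<subseteq> f ` carrier (fundamental_group S b)"
    proof
      fix h assume "h \<in> carrier H"
      then obtain \<gamma> where "\<gamma> \<in> loops_at S b" "\<Phi> \<gamma> = h" using surj by blast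
      then have "f (path_class S \<gamma>) = h" "path_class S \<gamma> \<in> carrier (fundamental_group S b)"
        using fval carr by auto
      then show "h \<in> f ` carrier (fundamental_group S b)"
        by (metis image_eqI)
    qed
  qed
  have "f \<in> iso (fundamental_group S b) H"
    using hom inj img by (simp add: iso_def bij_betw_def)
  then show ?thesis by (rule is_isoI)
qed


lemma loops_at_compose:
  assumes "\<gamma> \<in> loops_at S a" "continuous_on S F" "F \<in> S \<rightarrow> T"
  shows "F \<circ> \<gamma> \<in> loops_at T (F a)"
proof -
  have "path (F \<circ> \<gamma>)"
    using assms(1) continuous_on_subset[OF assms(2)]
    by (intro path_continuous_image) (auto simp: loops_at_def)
  moreover have "path_image (F \<circ> \<gamma>) \<subseteq> T"
    using assms by (auto simp: loops_at_def path_image_compose)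
  ultimately show ?thesis using assms by (auto simp: loops_at_def pathstart_compose pathfinish_compose)
qed

lemma homotopic_to_retract:
  fixes S :: "(nat \<Rightarrow> 'b::real_normed_vector) set" and T :: "'c::topological_space set"
  assumes contF: "continuous_on S F" and FST: "F \<in> S \<rightarrow> T"
    and contG: "continuous_on T G" and GTS: "G \<in> T \<rightarrow> S"
    and GFa: "G (F a) = a"
    and K: "\<And>x s. x \<in> S \<Longrightarrow> s \<in> {0..1} \<Longrightarrow> (\<lambda>i. (1-s) *\<^sub>R x i + s *\<^sub>R G (F x) i) \<in> S"
    and g: "\<gamma> \<in> loops_at S a"
  shows "homotopic_paths S \<gamma> (G \<circ> (F \<circ> \<gamma>))"
proof -
  have pg: "path \<gamma>" "path_image \<gamma> \<subseteq> S" "pathstart \<gamma> = a" "pathfinish \<gamma> = a"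
    using g by (auto simp: loops_at_def)
  have gs: "\<gamma> t \<in> S" if "t \<in> {0..1}" for t using pg(2) that by (auto simp: path_image_def)
  have pc: "continuous_on {0..1} \<gamma>" using pg(1) by (simp add: path_def)
  have c1: "continuous_on ({0..1}\<times>{0..1}) (\<lambda>y::real\<times>real. \<gamma> (snd y))"
    by (rule continuous_on_compose2[OF pc continuous_on_snd[OF continuous_on_id]]) auto
  have cGF: "continuous_on S (\<lambda>x. G (F x))"
    by (rule continuous_on_compose2[OF contG contF]) (use FST in auto)
  have c2: "continuous_on ({0..1}\<times>{0..1}) (\<lambda>y::real\<times>real. G (F (\<gamma> (snd y))))"
    by (rule continuous_on_compose2[OF cGF c1]) (use gs in auto)
  define h where "h y = (\<lambda>i. (1 - fst y) *\<^sub>R \<gamma> (snd y) i + fst y *\<^sub>R G (F (\<gamma> (snd y))) i)"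
    for y :: "real \<times> real"
  have "continuous_on ({0..1}\<times>{0..1}) h"
    unfolding h_def
  proof (rule continuous_on_coordinatewise_then_product)
    fix i
    have ci1: "continuous_on ({0..1}\<times>{0..1}) (\<lambda>y::real\<times>real. \<gamma> (snd y) i)"
      by (rule continuous_on_product_then_coordinatewise[OF c1])
    have ci2: "continuous_on ({0..1}\<times>{0..1}) (\<lambda>y::real\<times>real. G (F (\<gamma> (snd y))) i)"
      by (rule continuous_on_product_then_coordinatewise[OF c2])
    show "continuous_on ({0..1}\<times>{0..1})
       (\<lambda>y::real\<times>real. (1 - fst y) *\<^sub>R \<gamma> (snd y) i + fst y *\<^sub>R G (F (\<gamma> (snd y))) i)"
      by (intro continuous_on_add continuous_on_scaleR continuous_on_diff continuous_on_const
          continuous_on_fst continuous_on_id ci1 ci2)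
  qed
  moreover have "h \<in> ({0..1}\<times>{0..1}) \<rightarrow> S"
    using K gs unfolding h_def by auto
  moreover have "\<forall>x\<in>{0..1}. h (0, x) = \<gamma> x" by (simp add: h_def)
  moreover have "\<forall>x\<in>{0..1}. h (1, x) = (G \<circ> (F \<circ> \<gamma>)) x" by (simp add: h_def)
  moreover have "\<forall>t\<in>{0..1::real}. pathstart (h \<circ> Pair t) = pathstart \<gamma> \<and> pathfinish (h \<circ> Pair t) = pathfinish \<gamma>"
  proof (intro ballI conjI)
    fix t :: real
    have "\<gamma> 0 = a" "\<gamma> 1 = a" using pg by (auto simp: pathstart_def pathfinish_def)
    then show "pathstart (h \<circ> Pair t) = pathstart \<gamma>" "pathfinish (h \<circ> Pair t) = pathfinish \<gamma>"
      using pg GFa by (simp_all add: h_def pathstart_def pathfinish_def scaleR_left_distrib[symmetric])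
  qed
  ultimately show ?thesis unfolding homotopic_paths by blast
qed

lemma transfer_iso:
  fixes S :: "(nat \<Rightarrow> 'b::real_normed_vector) set" and T :: "'c::topological_space set"
    and H :: "('g,'m) monoid_scheme"
  assumes contF: "continuous_on S F" and FST: "F \<in> S \<rightarrow> T"
    and contG: "continuous_on T G" and GTS: "G \<in> T \<rightarrow> S"
    and FG: "\<And>y. y \<in> T \<Longrightarrow> F (G y) = y" and GFa: "G (F a) = a"
    and K: "\<And>x s. x \<in> S \<Longrightarrow> s \<in> {0..1} \<Longrightarrow> (\<lambda>i. (1-s) *\<^sub>R x i + s *\<^sub>R G (F x) i) \<in> S"
    and inH: "\<And>\<gamma>. \<gamma> \<in> loops_at T (F a) \<Longrightarrow> \<Psi> \<gamma> \<in> carrier H"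
    and hiff: "\<And>\<gamma>1 \<gamma>2. \<gamma>1 \<in> loops_at T (F a) \<Longrightarrow> \<gamma>2 \<in> loops_at T (F a) \<Longrightarrow>
               homotopic_paths T \<gamma>1 \<gamma>2 \<longleftrightarrow> \<Psi> \<gamma>1 = \<Psi> \<gamma>2"
    and mult: "\<And>\<gamma>1 \<gamma>2. \<gamma>1 \<in> loops_at T (F a) \<Longrightarrow> \<gamma>2 \<in> loops_at T (F a) \<Longrightarrow>
               \<Psi> (\<gamma>1 +++ \<gamma>2) = \<Psi> \<gamma>1 \<otimes>\<^bsub>H\<^esub> \<Psi> \<gamma>2"
    and surj: "\<And>h. h \<in> carrier H \<Longrightarrow> \<exists>\<gamma>\<in>loops_at T (F a). \<Psi> \<gamma> = h"
  shows "fundamental_group S a \<cong> H"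
proof (rule fg_iso[where \<Phi>="\<lambda>\<gamma>. \<Psi> (F \<circ> \<gamma>)"])
  have L1: "F \<circ> \<gamma> \<in> loops_at T (F a)" if "\<gamma> \<in> loops_at S a" for \<gamma>
    using loops_at_compose[OF that contF FST] .
  have L2: "G \<circ> \<delta> \<in> loops_at S a" if "\<delta> \<in> loops_at T (F a)" for \<delta>
    using loops_at_compose[OF that contG GTS] GFa by simp
  show "\<Psi> (F \<circ> \<gamma>) \<in> carrier H" if "\<gamma> \<in> loops_at S a" for \<gamma> using inH L1 that by blast
  show "\<Psi> (F \<circ> (\<gamma>1 +++ \<gamma>2)) = \<Psi> (F \<circ> \<gamma>1) \<otimes>\<^bsub>H\<^esub> \<Psi> (F \<circ> \<gamma>2)"
    if "\<gamma>1 \<in> loops_at S a" "\<gamma>2 \<in> loops_at S a" for \<gamma>1 \<gamma>2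
    using mult[OF L1 L1, OF that] by (simp add: path_compose_join)
  show "homotopic_paths S \<gamma>1 \<gamma>2 \<longleftrightarrow> \<Psi> (F \<circ> \<gamma>1) = \<Psi> (F \<circ> \<gamma>2)"
    if g1: "\<gamma>1 \<in> loops_at S a" and g2: "\<gamma>2 \<in> loops_at S a" for \<gamma>1 \<gamma>2
  proof -
    have "homotopic_paths S \<gamma>1 \<gamma>2 \<longleftrightarrow> homotopic_paths T (F \<circ> \<gamma>1) (F \<circ> \<gamma>2)"
    proof
      assume "homotopic_paths S \<gamma>1 \<gamma>2"
      then show "homotopic_paths T (F \<circ> \<gamma>1) (F \<circ> \<gamma>2)"
        using homotopic_paths_continuous_image contF FST by blast
    next
      assume "homotopic_paths T (F \<circ> \<gamma>1) (F \<circ> \<gamma>2)"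
      then have "homotopic_paths S (G \<circ> (F \<circ> \<gamma>1)) (G \<circ> (F \<circ> \<gamma>2))"
        using homotopic_paths_continuous_image contG GTS by blast
      moreover have "homotopic_paths S \<gamma>1 (G \<circ> (F \<circ> \<gamma>1))"
        using homotopic_to_retract[OF contF FST contG GTS GFa K g1] by blast
      moreover have "homotopic_paths S \<gamma>2 (G \<circ> (F \<circ> \<gamma>2))"
        using homotopic_to_retract[OF contF FST contG GTS GFa K g2] by blast
      ultimately show "homotopic_paths S \<gamma>1 \<gamma>2"
        by (meson homotopic_paths_sym homotopic_paths_trans)
    qed
    then show ?thesis using hiff[OF L1[OF g1] L1[OF g2]] by simp
  qed
  show "\<exists>\<gamma>\<in>loops_at S a. \<Psi> (F \<circ> \<gamma>) = h" if hH: "h \<in> carrier H" for h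
  proof -
    obtain \<delta> where d: "\<delta> \<in> loops_at T (F a)" "\<Psi> \<delta> = h" using surj[OF hH] by blast
    have l: "F \<circ> (G \<circ> \<delta>) \<in> loops_at T (F a)" using L1[OF L2[OF d(1)]] .
    have "homotopic_paths T (F \<circ> (G \<circ> \<delta>)) \<delta>"
    proof (rule homotopic_paths_eq)
      show "path (F \<circ> (G \<circ> \<delta>))" "path_image (F \<circ> (G \<circ> \<delta>)) \<subseteq> T"
        using l by (auto simp: loops_at_def)
      show "(F \<circ> (G \<circ> \<delta>)) t = \<delta> t" if "t \<in> {0..1}" for t
      proof -
        have "\<delta> t \<in> T" using d(1) that by (auto simp: loops_at_def path_image_def)
        then show ?thesis using FG by simp
      qed
    qed
    then have "\<Psi> (F \<circ> (G \<circ> \<delta>)) = h" using hiff[OF l d(1)] d(2) by simp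
    then show ?thesis using L2[OF d(1)] by blast
  qed
qed



definition wn :: "(real \<Rightarrow> complex) \<Rightarrow> int" where
  "wn \<gamma> = \<lfloor>Re (winding_number \<gamma> 0)\<rfloor>"

lemma loops_Cstar: "\<gamma> \<in> loops_at (-{0}) b \<longleftrightarrow>
   path \<gamma> \<and> 0 \<notin> path_image \<gamma> \<and> pathstart \<gamma> = b \<and> pathfinish \<gamma> = b"
  unfolding loops_at_def by blast

lemma wn_eq:
  assumes "\<gamma> \<in> loops_at (-{0}) b"
  shows "winding_number \<gamma> 0 = of_int (wn \<gamma>)"
proof -
  have "winding_number \<gamma> 0 \<in> \<int>"
    using assms by (intro integer_winding_number) (auto simp: loops_Cstar)
  then obtain k where "winding_number \<gamma> 0 = of_int k" by (elim Ints_cases)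
  then show ?thesis by (simp add: wn_def)
qed

lemma wn_hiff:
  assumes "\<gamma>1 \<in> loops_at (-{0}) b" "\<gamma>2 \<in> loops_at (-{0}) b"
  shows "homotopic_paths (-{0}) \<gamma>1 \<gamma>2 \<longleftrightarrow> wn \<gamma>1 = wn \<gamma>2"
proof -
  have "winding_number \<gamma>1 0 = winding_number \<gamma>2 0 \<longleftrightarrow> homotopic_paths (-{0}) \<gamma>1 \<gamma>2"
    using assms by (intro winding_number_homotopic_paths_eq) (auto simp: loops_Cstar)
  moreover have "winding_number \<gamma>1 0 = winding_number \<gamma>2 0 \<longleftrightarrow> wn \<gamma>1 = wn \<gamma>2"
    using wn_eq[OF assms(1)] wn_eq[OF assms(2)] by simp
  ultimately show ?thesis by simp
qed

lemma wn_mult: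
  assumes "\<gamma>1 \<in> loops_at (-{0}) b" "\<gamma>2 \<in> loops_at (-{0}) b"
  shows "wn (\<gamma>1 +++ \<gamma>2) = wn \<gamma>1 + wn \<gamma>2"
proof -
  have j: "\<gamma>1 +++ \<gamma>2 \<in> loops_at (-{0}) b"
    using assms path_join_imp[of \<gamma>1 \<gamma>2] path_image_join_subset[of \<gamma>1 \<gamma>2]
    unfolding loops_at_def by auto
  have "winding_number (\<gamma>1 +++ \<gamma>2) 0 = winding_number \<gamma>1 0 + winding_number \<gamma>2 0"
    using assms by (intro winding_number_join) (auto simp: loops_Cstar)
  then have "(of_int (wn (\<gamma>1 +++ \<gamma>2)) :: complex) = of_int (wn \<gamma>1) + of_int (wn \<gamma>2)"
    using wn_eq[OF j] wn_eq[OF assms(1)] wn_eq[OF assms(2)] by simp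
  then show ?thesis by (metis of_int_add of_int_eq_iff)
qed

lemma exists_loop_nat: "\<exists>\<gamma>. \<gamma> \<in> loops_at (-{0}) 1 \<and> winding_number \<gamma> 0 = of_nat n"
proof (induction n)
  case 0
  have l: "linepath (1::complex) 1 \<in> loops_at (-{0}) 1"
    by (simp add: loops_Cstar)
  have w: "winding_number (linepath (1::complex) 1) 0 = 0"
    by (rule winding_number_trivial) simp
  show ?case
  proof (intro exI conjI)
    show "linepath (1::complex) 1 \<in> loops_at (-{0}) 1" by (fact l)
    show "winding_number (linepath (1::complex) 1) 0 = of_nat 0" using w by (simp only: of_nat_0)
  qed
next
  case (Suc n)
  then obtain \<gamma> where g: "\<gamma> \<in> loops_at (-{0}) 1" "winding_number \<gamma> 0 = of_nat n" by blast
  have c: "circlepath 0 1 \<in> loops_at (-{0}) 1" by (simp add: loops_Cstar)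
  have j: "\<gamma> +++ circlepath 0 1 \<in> loops_at (-{0}) 1"
    using g(1) c path_join_imp[of \<gamma> "circlepath 0 1"] path_image_join_subset[of \<gamma> "circlepath 0 1"]
    unfolding loops_at_def by auto
  have "winding_number (\<gamma> +++ circlepath 0 1) 0 = winding_number \<gamma> 0 + winding_number (circlepath 0 1) 0"
    using g(1) c by (intro winding_number_join) (auto simp: loops_Cstar)
  also have "\<dots> = of_nat (Suc n)" using g(2) winding_number_circlepath_centre[of 1 0] by simp
  finally show ?case using j by blast
qed

lemma exists_loop: "\<exists>\<gamma>. \<gamma> \<in> loops_at (-{0}) 1 \<and> wn \<gamma> = k"
proof (cases "k \<ge> 0")
  case True
  obtain \<gamma> where g: "\<gamma> \<in> loops_at (-{0}) 1" "winding_number \<gamma> 0 = of_nat (nat k)"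
    using exists_loop_nat by blast
  then have "(of_int (wn \<gamma>) :: complex) = of_int k" using wn_eq[OF g(1)] True by simp
  then show ?thesis using g(1) by (metis of_int_eq_iff)
next
  case False
  obtain \<gamma> where g: "\<gamma> \<in> loops_at (-{0}) 1" "winding_number \<gamma> 0 = of_nat (nat (-k))"
    using exists_loop_nat by blast
  have r: "reversepath \<gamma> \<in> loops_at (-{0}) 1" using g(1) by (simp add: loops_Cstar)
  have "winding_number (reversepath \<gamma>) 0 = - winding_number \<gamma> 0"
    using g(1) by (intro winding_number_reversepath) (auto simp: loops_Cstar)
  then have "(of_int (wn (reversepath \<gamma>)) :: complex) = of_int k"
    using wn_eq[OF r] g(2) False by simp
  then show ?thesis using r by (metis of_int_eq_iff)
qed

lemma homotopic_paths_pair: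
  assumes "homotopic_paths A p1 q1" "homotopic_paths B p2 q2"
  shows "homotopic_paths (A \<times> B) (\<lambda>t. (p1 t, p2 t)) (\<lambda>t. (q1 t, q2 t))"
proof -
  obtain h1 where h1: "continuous_on ({0..1} \<times> {0..1}) h1" "h1 \<in> ({0..1} \<times> {0..1}) \<rightarrow> A"
    "\<forall>x\<in>{0..1}. h1 (0, x) = p1 x" "\<forall>x\<in>{0..1}. h1 (1, x) = q1 x"
    "\<forall>t\<in>{0..1::real}. pathstart (h1 \<circ> Pair t) = pathstart p1 \<and> pathfinish (h1 \<circ> Pair t) = pathfinish p1"
    using assms(1) unfolding homotopic_paths by blast
  obtain h2 where h2: "continuous_on ({0..1} \<times> {0..1}) h2" "h2 \<in> ({0..1} \<times> {0..1}) \<rightarrow> B"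
    "\<forall>x\<in>{0..1}. h2 (0, x) = p2 x" "\<forall>x\<in>{0..1}. h2 (1, x) = q2 x"
    "\<forall>t\<in>{0..1::real}. pathstart (h2 \<circ> Pair t) = pathstart p2 \<and> pathfinish (h2 \<circ> Pair t) = pathfinish p2"
    using assms(2) unfolding homotopic_paths by blast
  let ?h = "\<lambda>y. (h1 y, h2 y)"
  have "continuous_on ({0..1} \<times> {0..1}) ?h" using h1(1) h2(1) by (rule continuous_on_Pair)
  moreover have "?h \<in> ({0..1} \<times> {0..1}) \<rightarrow> A \<times> B" using h1(2) h2(2) by blast
  moreover have "\<forall>x\<in>{0..1}. ?h (0, x) = (p1 x, p2 x)" using h1(3) h2(3) by simp
  moreover have "\<forall>x\<in>{0..1}. ?h (1, x) = (q1 x, q2 x)" using h1(4) h2(4) by simp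
  moreover have "\<forall>t\<in>{0..1::real}. pathstart (?h \<circ> Pair t) = pathstart (\<lambda>t. (p1 t, p2 t)) \<and>
       pathfinish (?h \<circ> Pair t) = pathfinish (\<lambda>t. (p1 t, p2 t))"
    using h1(5) h2(5) by (simp add: pathstart_def pathfinish_def)
  ultimately show ?thesis unfolding homotopic_paths by blast
qed



lemma loops_fst:
  assumes "\<delta> \<in> loops_at ((-{0::complex}) \<times> (-{0::complex})) (1,1)"
  shows "fst \<circ> \<delta> \<in> loops_at (-{0}) 1"
proof -
  have "fst \<in> (-{0::complex}) \<times> (-{0::complex}) \<rightarrow> -{0}" by auto
  from loops_at_compose[OF assms continuous_on_fst[OF continuous_on_id] this] show ?thesis by simp
qed

lemma loops_snd:
  assumes "\<delta> \<in> loops_at ((-{0::complex}) \<times> (-{0::complex})) (1,1)"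
  shows "snd \<circ> \<delta> \<in> loops_at (-{0}) 1"
proof -
  have "snd \<in> (-{0::complex}) \<times> (-{0::complex}) \<rightarrow> -{0}" by auto
  from loops_at_compose[OF assms continuous_on_snd[OF continuous_on_id] this] show ?thesis by simp
qed

lemma pair_split_fun: "(\<lambda>t. ((fst \<circ> \<delta>) t, (snd \<circ> \<delta>) t)) = \<delta>"
  by simp

lemma Cstar2_hiff:
  assumes d1: "\<delta>1 \<in> loops_at ((-{0::complex}) \<times> (-{0::complex})) (1,1)"
    and d2: "\<delta>2 \<in> loops_at ((-{0::complex}) \<times> (-{0::complex})) (1,1)"
  shows "homotopic_paths ((-{0}) \<times> (-{0})) \<delta>1 \<delta>2 \<longleftrightarrow>
         (wn (fst \<circ> \<delta>1), wn (snd \<circ> \<delta>1)) = (wn (fst \<circ> \<delta>2), wn (snd \<circ> \<delta>2))"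
proof
  assume h: "homotopic_paths ((-{0}) \<times> (-{0})) \<delta>1 \<delta>2"
  have "homotopic_paths (-{0}) (fst \<circ> \<delta>1) (fst \<circ> \<delta>2)"
    using homotopic_paths_continuous_image[OF h continuous_on_fst[OF continuous_on_id], of "-{0}"]
    by (auto simp: Pi_def)
  moreover have "homotopic_paths (-{0}) (snd \<circ> \<delta>1) (snd \<circ> \<delta>2)"
    using homotopic_paths_continuous_image[OF h continuous_on_snd[OF continuous_on_id], of "-{0}"]
    by (auto simp: Pi_def)
  ultimately show "(wn (fst \<circ> \<delta>1), wn (snd \<circ> \<delta>1)) = (wn (fst \<circ> \<delta>2), wn (snd \<circ> \<delta>2))"
    using wn_hiff[OF loops_fst[OF d1] loops_fst[OF d2]] wn_hiff[OF loops_snd[OF d1] loops_snd[OF d2]]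
    by simp
next
  assume "(wn (fst \<circ> \<delta>1), wn (snd \<circ> \<delta>1)) = (wn (fst \<circ> \<delta>2), wn (snd \<circ> \<delta>2))"
  then have "homotopic_paths (-{0}) (fst \<circ> \<delta>1) (fst \<circ> \<delta>2)" "homotopic_paths (-{0}) (snd \<circ> \<delta>1) (snd \<circ> \<delta>2)"
    using wn_hiff[OF loops_fst[OF d1] loops_fst[OF d2]] wn_hiff[OF loops_snd[OF d1] loops_snd[OF d2]]
    by simp_all
  from homotopic_paths_pair[OF this]
  show "homotopic_paths ((-{0}) \<times> (-{0})) \<delta>1 \<delta>2" unfolding pair_split_fun .
qed

lemma Cstar2_mult:
  assumes d1: "\<delta>1 \<in> loops_at ((-{0::complex}) \<times> (-{0::complex})) (1,1)"
    and d2: "\<delta>2 \<in> loops_at ((-{0::complex}) \<times> (-{0::complex})) (1,1)"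
  shows "(wn (fst \<circ> (\<delta>1 +++ \<delta>2)), wn (snd \<circ> (\<delta>1 +++ \<delta>2))) =
         (wn (fst \<circ> \<delta>1), wn (snd \<circ> \<delta>1)) \<otimes>\<^bsub>DirProd integer_group integer_group\<^esub>
         (wn (fst \<circ> \<delta>2), wn (snd \<circ> \<delta>2))"
  using wn_mult[OF loops_fst[OF d1] loops_fst[OF d2]] wn_mult[OF loops_snd[OF d1] loops_snd[OF d2]]
  by (simp add: path_compose_join DirProd_def integer_group_def)

lemma Cstar2_surj:
  "\<exists>\<delta>\<in>loops_at ((-{0::complex}) \<times> (-{0::complex})) (1,1). (wn (fst \<circ> \<delta>), wn (snd \<circ> \<delta>)) = (m, n)"
proof -
  obtain \<gamma>1 where g1: "\<gamma>1 \<in> loops_at (-{0}) 1" "wn \<gamma>1 = m" using exists_loop by blast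
  obtain \<gamma>2 where g2: "\<gamma>2 \<in> loops_at (-{0}) 1" "wn \<gamma>2 = n" using exists_loop by blast
  let ?d = "\<lambda>t. (\<gamma>1 t, \<gamma>2 t)"
  have "path ?d" using g1(1) g2(1) unfolding loops_at_def path_def
    by (intro continuous_on_Pair) auto
  moreover have "path_image ?d \<subseteq> (-{0}) \<times> (-{0})"
    using g1(1) g2(1) unfolding loops_at_def path_image_def by auto
  moreover have "pathstart ?d = (1,1)" "pathfinish ?d = (1,1)"
    using g1(1) g2(1) unfolding loops_at_def pathstart_def pathfinish_def by auto
  ultimately have "?d \<in> loops_at ((-{0::complex}) \<times> (-{0::complex})) (1,1)"
    unfolding loops_at_def by blast
  moreover have "fst \<circ> ?d = \<gamma>1" "snd \<circ> ?d = \<gamma>2" by (auto simp: o_def)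
  ultimately show ?thesis using g1(2) g2(2) by (intro bexI[of _ ?d]) simp_all
qed



definition cmul :: "complex \<Rightarrow> complex \<times> complex \<Rightarrow> complex \<times> complex" where
  "cmul w z = (w * fst z, w * snd z)"

lemma re_add: "root_eval \<alpha> (x + y) = root_eval \<alpha> x + root_eval \<alpha> y"
  by (simp add: root_eval_def algebra_simps)

lemma re_diff: "root_eval \<alpha> (x - y) = root_eval \<alpha> x - root_eval \<alpha> y"
  by (simp add: root_eval_def algebra_simps)

lemma re_scaleR: "root_eval \<alpha> (c *\<^sub>R x) = of_real c * root_eval \<alpha> x"
  by (simp add: root_eval_def scaleR_conv_of_real algebra_simps)

lemma re_cmul: "root_eval \<alpha> (cmul w x) = w * root_eval \<alpha> x"
  by (simp add: root_eval_def cmul_def algebra_simps)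

lemma re_zero [simp]: "root_eval \<alpha> 0 = 0"
  by (simp add: root_eval_def)

lemma re_neg: "root_eval (- fst \<beta>, - snd \<beta>) x = - root_eval \<beta> x"
  by (simp add: root_eval_def algebra_simps)

lemma cmul_one [simp]: "cmul 1 x = x"
  by (simp add: cmul_def)

lemma cmul_nz: "w \<noteq> 0 \<Longrightarrow> x \<noteq> 0 \<Longrightarrow> cmul w x \<noteq> 0"
  by (cases x) (auto simp: cmul_def zero_prod_def)

lemma cont_cmul: "continuous_on U (\<lambda>w. cmul w x)"
  unfolding cmul_def by (intro continuous_on_Pair continuous_on_mult continuous_on_id continuous_on_const)

lemma cont_re_coord: "continuous_on U (\<lambda>X::nat \<Rightarrow> complex \<times> complex. root_eval \<alpha> (X i))"
proof -
  have c: "continuous_on U (\<lambda>X::nat \<Rightarrow> complex \<times> complex. X i)"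
    by (rule continuous_on_subset[OF continuous_on_product_coordinates]) simp
  show ?thesis unfolding root_eval_def
    by (intro continuous_on_add continuous_on_mult continuous_on_const continuous_on_fst[OF c]
        continuous_on_snd[OF c])
qed

lemma LA:
  assumes "fst \<alpha> * snd \<beta> - snd \<alpha> * fst \<beta> \<noteq> 0"
    and "root_eval \<alpha> z = 0" "root_eval \<beta> z = 0"
  shows "z = 0"
proof -
  obtain a b where ab: "\<alpha> = (a,b)" by (cases \<alpha>)
  obtain c d where cd: "\<beta> = (c,d)" by (cases \<beta>)
  obtain z1 z2 where z: "z = (z1,z2)" by (cases z)
  have e1: "of_int a * z1 + of_int b * z2 = 0" and e2: "of_int c * z1 + of_int d * z2 = 0"
    using assms(2,3) by (simp_all add: root_eval_def ab cd z)
  define k where "k = a*d - b*c"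
  have k0: "k \<noteq> 0" using assms(1) by (simp add: ab cd k_def)
  then have det: "(of_int k :: complex) \<noteq> 0" by (simp only: of_int_eq_0_iff) simp
  have "of_int k * z1 = of_int d * (of_int a * z1 + of_int b * z2) - of_int b * (of_int c * z1 + of_int d * z2)"
    by (simp add: k_def algebra_simps)
  then have "of_int k * z1 = 0" using e1 e2 by simp
  then have 1: "z1 = 0" using det by (metis mult_eq_0_iff)
  have "of_int k * z2 = of_int a * (of_int c * z1 + of_int d * z2) - of_int c * (of_int a * z1 + of_int b * z2)"
    by (simp add: k_def algebra_simps)
  then have "of_int k * z2 = 0" using e1 e2 by simp
  then have 2: "z2 = 0" using det by (metis mult_eq_0_iff)
  show ?thesis using 1 2 z by (simp add: zero_prod_def)
qed


lemma roots_A2: "roots A2 = {(1,0), (0,1), (1,1), (-1,0), (0,-1), (-1,-1)}"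
  by (simp add: roots_def pos_roots_def insert_commute)
lemma roots_B2: "roots B2 = {(1,0), (0,1), (1,1), (1,2), (-1,0), (0,-1), (-1,-1), (-1,-2)}"
  by (simp add: roots_def pos_roots_def insert_commute)
lemma roots_G2: "roots G2 = {(1,0), (0,1), (1,1), (2,1), (3,1), (3,2), (-1,0), (0,-1), (-1,-1), (-2,-1), (-3,-1), (-3,-2)}"
  by (simp add: roots_def pos_roots_def insert_commute)
lemma roots_indep_all: "\<forall>\<alpha>\<in>roots g. \<forall>\<beta>\<in>roots g. \<alpha> \<noteq> \<beta> \<and> \<alpha> \<noteq> (- fst \<beta>, - snd \<beta>) \<longrightarrow> fst \<alpha> * snd \<beta> - snd \<alpha> * fst \<beta> \<noteq> 0"
  by (cases g) (simp_all add: roots_A2 roots_B2 roots_G2)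
lemma roots_other_all: "\<forall>\<beta>\<in>roots g. \<exists>\<alpha>\<in>roots g. \<alpha> \<noteq> \<beta> \<and> \<alpha> \<noteq> (- fst \<beta>, - snd \<beta>)"
  by (cases g) (simp_all add: roots_A2 roots_B2 roots_G2)
lemma roots_nz_all: "\<forall>\<alpha>\<in>roots g. fst \<alpha> * fst \<alpha> + snd \<alpha> * snd \<alpha> \<noteq> 0"
  by (cases g) (simp_all add: roots_A2 roots_B2 roots_G2)

lemma roots_nz: "\<alpha> \<in> roots g \<Longrightarrow> fst \<alpha> * fst \<alpha> + snd \<alpha> * snd \<alpha> \<noteq> 0"
  using roots_nz_all by blast

lemma roots_indep:
  "\<alpha> \<in> roots g \<Longrightarrow> \<beta> \<in> roots g \<Longrightarrow> \<alpha> \<noteq> \<beta> \<Longrightarrow> \<alpha> \<noteq> (- fst \<beta>, - snd \<beta>) \<Longrightarrow>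
   fst \<alpha> * snd \<beta> - snd \<alpha> * fst \<beta> \<noteq> 0"
  using roots_indep_all by blast

lemma roots_other:
  "\<beta> \<in> roots g \<Longrightarrow> \<exists>\<alpha>\<in>roots g. \<alpha> \<noteq> \<beta> \<and> \<alpha> \<noteq> (- fst \<beta>, - snd \<beta>)"
  using roots_other_all by blast

lemma roots_cases:
  "\<alpha> \<in> roots g \<Longrightarrow> \<beta> \<in> roots g \<Longrightarrow>
   \<alpha> = \<beta> \<or> \<alpha> = (- fst \<beta>, - snd \<beta>) \<or> fst \<alpha> * snd \<beta> - snd \<alpha> * fst \<beta> \<noteq> 0"
  using roots_indep by blast

lemma coeff_alpha_poly:
  "coeff (alpha_poly \<alpha> p X) n = (if 1 \<le> n \<and> n \<le> p then root_eval \<alpha> (X n) else 0)"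
  by (simp add: alpha_poly_def coeff_sum coeff_monom)

lemma alpha_poly_neg: "alpha_poly (- fst \<beta>, - snd \<beta>) p X = - alpha_poly \<beta> p X"
  by (simp add: poly_eq_iff coeff_alpha_poly re_neg)

lemma degree_alpha_poly_neg: "degree (alpha_poly (- fst \<beta>, - snd \<beta>) p X) = degree (alpha_poly \<beta> p X)"
  by (simp add: alpha_poly_neg)

lemma degree_alpha_le: "degree (alpha_poly \<alpha> p X) \<le> p"
  by (rule degree_le) (simp add: coeff_alpha_poly)

lemma deg0_iff: "degree (q::complex poly) = 0 \<longleftrightarrow> (\<forall>n\<ge>1. coeff q n = 0)"
proof
  assume "degree q = 0" then show "\<forall>n\<ge>1. coeff q n = 0" by (simp add: coeff_eq_0)
next
  assume "\<forall>n\<ge>1. coeff q n = 0" then have "degree q \<le> 0" by (intro degree_le) simp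
  then show "degree q = 0" by simp
qed

lemma degd_iff:
  assumes "d \<ge> 1"
  shows "degree (q::complex poly) = d \<longleftrightarrow> coeff q d \<noteq> 0 \<and> (\<forall>n>d. coeff q n = 0)"
proof
  assume h: "degree q = d"
  then have "q \<noteq> 0" using assms by auto
  then have "coeff q d \<noteq> 0" using h leading_coeff_neq_0 by metis
  then show "coeff q d \<noteq> 0 \<and> (\<forall>n>d. coeff q n = 0)" using h by (simp add: coeff_eq_0)
next
  assume h: "coeff q d \<noteq> 0 \<and> (\<forall>n>d. coeff q n = 0)"
  then have "d \<le> degree q" by (simp add: le_degree)
  moreover have "degree q \<le> d" using h by (intro degree_le) simp
  ultimately show "degree q = d" by simp
qed

lemma degp_iff:
  assumes "p \<ge> 1"
  shows "degree (alpha_poly \<alpha> p X) = p \<longleftrightarrow> root_eval \<alpha> (X p) \<noteq> 0"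
  using degd_iff[OF assms, of "alpha_poly \<alpha> p X"] assms by (simp add: coeff_alpha_poly)


lemma pc_inH: "\<delta> \<in> loops_at T b \<Longrightarrow> path_class T \<delta> \<in> carrier (fundamental_group T b)"
  by (simp add: fundamental_group_def)

lemma pc_hiff:
  assumes "\<delta>1 \<in> loops_at T b" "\<delta>2 \<in> loops_at T b"
  shows "homotopic_paths T \<delta>1 \<delta>2 \<longleftrightarrow> path_class T \<delta>1 = path_class T \<delta>2"
proof
  assume "homotopic_paths T \<delta>1 \<delta>2" then show "path_class T \<delta>1 = path_class T \<delta>2"
    by (rule homotopic_paths_class_eq)
next
  assume e: "path_class T \<delta>1 = path_class T \<delta>2"
  have "\<delta>2 \<in> path_class T \<delta>2" using assms(2) by (simp add: path_class_def loops_at_def)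
  then have "\<delta>2 \<in> path_class T \<delta>1" using e by simp
  then show "homotopic_paths T \<delta>1 \<delta>2" by (simp add: path_class_def)
qed

lemma pc_mult:
  assumes d1: "\<delta>1 \<in> loops_at T b" and d2: "\<delta>2 \<in> loops_at T b"
  shows "path_class T (\<delta>1 +++ \<delta>2) = path_class T \<delta>1 \<otimes>\<^bsub>fundamental_group T b\<^esub> path_class T \<delta>2"
proof -
  let ?p = "SOME q. q \<in> path_class T \<delta>1" and ?q = "SOME q. q \<in> path_class T \<delta>2"
  have p: "homotopic_paths T \<delta>1 ?p" using some_in_class[OF d1] by blast
  have q: "homotopic_paths T \<delta>2 ?q" using some_in_class[OF d2] by blast
  have "pathfinish \<delta>1 = pathstart \<delta>2" using d1 d2 by (simp add: loops_at_def)
  then have "homotopic_paths T (\<delta>1 +++ \<delta>2) (?p +++ ?q)" by (rule homotopic_paths_join[OF p q])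
  then have "path_class T (\<delta>1 +++ \<delta>2) = path_class T (?p +++ ?q)" by (rule homotopic_paths_class_eq)
  then show ?thesis by (simp add: fundamental_group_def)
qed

lemma pc_surj: "h \<in> carrier (fundamental_group T b) \<Longrightarrow> \<exists>\<delta>\<in>loops_at T b. path_class T \<delta> = h"
  by (auto simp: fundamental_group_def)

theorem corollary5p8:
  fixes g :: rank2_type and p :: nat and A :: "nat \<Rightarrow> complex \<times> complex"
  assumes "p \<ge> 1"
    and "\<forall>i. i \<notin> {1..p} \<longrightarrow> A i = 0"
    and "A p \<noteq> 0"
  shows "Gamma_Q g p A \<cong> integer_group
       \<or> Gamma_Q g p A \<cong> DirProd integer_group integer_group
       \<or> (\<exists>b\<in>t_reg g. Gamma_Q g p A \<cong> fundamental_group (t_reg g) b)"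
proof -
  note p1 = assms(1) and suppA = assms(2) and Ap = assms(3)
  define S where "S = B_Q g p A"
  have GQ: "Gamma_Q g p A = fundamental_group S A" by (simp add: Gamma_Q_def S_def)
  have AS: "A \<in> S" using suppA by (simp add: S_def B_Q_def)
  have cc: "continuous_on U (\<lambda>X::nat \<Rightarrow> complex \<times> complex. X i)" for U i
    by (rule continuous_on_subset[OF continuous_on_product_coordinates]) simp
  show ?thesis
  proof (cases "\<forall>\<alpha>\<in>roots g. root_eval \<alpha> (A p) \<noteq> 0")
    case True
    have degA: "degree (alpha_poly \<alpha> p A) = p" if "\<alpha> \<in> roots g" for \<alpha>
      using degp_iff[OF p1] True that by blast
    have Schar: "X \<in> S \<longleftrightarrow> (\<forall>i. i \<notin> {1..p} \<longrightarrow> X i = 0) \<and> X p \<in> t_reg g" for X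
    proof -
      have "(\<forall>\<alpha>\<in>roots g. degree (alpha_poly \<alpha> p X) = degree (alpha_poly \<alpha> p A)) \<longleftrightarrow>
            (\<forall>\<alpha>\<in>roots g. root_eval \<alpha> (X p) \<noteq> 0)"
        using degA degp_iff[OF p1, of _ X] by auto
      then show ?thesis unfolding S_def B_Q_def t_reg_def by auto
    qed
    define F where "F X = X p" for X :: "nat \<Rightarrow> complex \<times> complex"
    define G where "G z = A(p := z)" for z
    define T where "T = t_reg g"
    have FA: "F A = A p" by (simp add: F_def)
    have c1: "continuous_on S F" unfolding F_def by (rule cc)
    have c2: "F \<in> S \<rightarrow> T" using Schar by (auto simp: F_def T_def)
    have c3: "continuous_on T G" unfolding G_def
    proof (rule continuous_on_coordinatewise_then_product)
      fix i show "continuous_on T (\<lambda>z. (A(p := z)) i)"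
        by (cases "i = p") (simp_all add: continuous_on_id continuous_on_const)
    qed
    have c4: "G \<in> T \<rightarrow> S"
    proof
      fix z assume "z \<in> T"
      then show "G z \<in> S" using Schar suppA p1 by (auto simp: G_def T_def)
    qed
    have c5: "\<And>y. y \<in> T \<Longrightarrow> F (G y) = y" by (simp add: F_def G_def)
    have c6: "G (F A) = A" by (simp add: F_def G_def)
    have c7: "(\<lambda>i. (1-s) *\<^sub>R X i + s *\<^sub>R G (F X) i) \<in> S" if X: "X \<in> S" and s: "s \<in> {0..1}" for X s
    proof -
      have "(\<lambda>i. (1-s) *\<^sub>R X i + s *\<^sub>R G (F X) i) p = X p"
        by (simp add: F_def G_def scaleR_left_distrib[symmetric])
      moreover have "(\<lambda>i. (1-s) *\<^sub>R X i + s *\<^sub>R G (F X) i) i = 0" if "i \<notin> {1..p}" for i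
      proof -
        have "X i = 0" "A i = 0" "i \<noteq> p" using that X Schar suppA p1 by auto
        then show ?thesis by (simp add: F_def G_def)
      qed
      ultimately show ?thesis using Schar X by auto
    qed
    have iso: "fundamental_group S A \<cong> fundamental_group T (F A)"
      by (rule transfer_iso[OF c1 c2 c3 c4 c5 c6 c7 pc_inH pc_hiff pc_mult pc_surj])
    have "A p \<in> t_reg g" using Schar AS by blast
    then show ?thesis using iso GQ FA T_def by auto
  next
    case False
    then obtain \<beta> where \<beta>: "\<beta> \<in> roots g" "root_eval \<beta> (A p) = 0" by blast
    define lr where "lr = (snd \<beta>, - fst \<beta>)"
    have detl: "fst \<beta> * snd lr - snd \<beta> * fst lr \<noteq> 0"
    proof -
      have "fst \<beta> * snd lr - snd \<beta> * fst lr = - (fst \<beta> * fst \<beta> + snd \<beta> * snd \<beta>)"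
        by (simp add: lr_def algebra_simps)
      then show ?thesis
        by (simp only: neg_equal_0_iff_equal roots_nz[OF \<beta>(1)] not_False_eq_True)
    qed
    have KI0: "root_eval lr x \<noteq> 0" if "root_eval \<beta> x = 0" "x \<noteq> 0" for x
      using LA[OF detl] that by blast
    have KI: "x = y" if "root_eval \<beta> x = 0" "root_eval \<beta> y = 0" "root_eval lr x = root_eval lr y" for x y
    proof -
      have "x - y = 0" using LA[OF detl, of "x - y"] that by (simp add: re_diff)
      then show ?thesis by simp
    qed
    define c0 where "c0 = root_eval lr (A p)"
    have c0: "c0 \<noteq> 0" using KI0[OF \<beta>(2) Ap] by (simp add: c0_def)
    have other: "root_eval \<alpha> x \<noteq> 0"
      if "\<alpha> \<in> roots g" "\<alpha> \<noteq> \<beta>" "\<alpha> \<noteq> (- fst \<beta>, - snd \<beta>)" "x \<noteq> 0" "root_eval \<beta> x = 0" for \<alpha> x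
      using LA[OF roots_indep[OF that(1) \<beta>(1) that(2) that(3)], of x] that by blast
    define d where "d = degree (alpha_poly \<beta> p A)"
    have dp: "d < p" using degp_iff[OF p1, of \<beta> A] \<beta>(2) degree_alpha_le[of \<beta> p A] by (simp add: d_def)
    have Schar2: "X \<in> S \<longleftrightarrow> (\<forall>i. i \<notin> {1..p} \<longrightarrow> X i = 0) \<and> X p \<noteq> 0 \<and> degree (alpha_poly \<beta> p X) = d" for X
    proof
      assume X: "X \<in> S"
      then have supp: "\<forall>i. i \<notin> {1..p} \<longrightarrow> X i = 0"
        and degs: "\<forall>\<alpha>\<in>roots g. degree (alpha_poly \<alpha> p X) = degree (alpha_poly \<alpha> p A)"
        by (simp_all add: S_def B_Q_def)
      obtain \<alpha> where \<alpha>: "\<alpha> \<in> roots g" "\<alpha> \<noteq> \<beta>" "\<alpha> \<noteq> (- fst \<beta>, - snd \<beta>)" using roots_other[OF \<beta>(1)] by blast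
      have "root_eval \<alpha> (A p) \<noteq> 0" using other[OF \<alpha> Ap \<beta>(2)] .
      then have "degree (alpha_poly \<alpha> p A) = p" using degp_iff[OF p1] by blast
      then have "degree (alpha_poly \<alpha> p X) = p" using degs \<alpha>(1) by simp
      then have "root_eval \<alpha> (X p) \<noteq> 0" using degp_iff[OF p1] by blast
      then have "X p \<noteq> 0" by auto
      then show "(\<forall>i. i \<notin> {1..p} \<longrightarrow> X i = 0) \<and> X p \<noteq> 0 \<and> degree (alpha_poly \<beta> p X) = d"
        using supp degs \<beta>(1) by (simp add: d_def)
    next
      assume h: "(\<forall>i. i \<notin> {1..p} \<longrightarrow> X i = 0) \<and> X p \<noteq> 0 \<and> degree (alpha_poly \<beta> p X) = d"
      have bX: "root_eval \<beta> (X p) = 0"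
        using coeff_eq_0[of "alpha_poly \<beta> p X" p] h dp p1 by (simp add: coeff_alpha_poly)
      have "degree (alpha_poly \<alpha> p X) = degree (alpha_poly \<alpha> p A)" if \<alpha>: "\<alpha> \<in> roots g" for \<alpha>
      proof -
        consider "\<alpha> = \<beta>" | "\<alpha> = (- fst \<beta>, - snd \<beta>)" | "\<alpha> \<noteq> \<beta>" "\<alpha> \<noteq> (- fst \<beta>, - snd \<beta>)" by blast
        then show ?thesis
        proof cases
          case 1 then show ?thesis using h by (simp add: d_def)
        next
          case 2 then show ?thesis using h by (simp add: d_def degree_alpha_poly_neg)
        next
          case 3
          have "root_eval \<alpha> (X p) \<noteq> 0" using other[OF \<alpha> 3] h bX by blast
          moreover have "root_eval \<alpha> (A p) \<noteq> 0" using other[OF \<alpha> 3 Ap \<beta>(2)] .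
          ultimately show ?thesis using degp_iff[OF p1] by metis
        qed
      qed
      then show "X \<in> S" using h by (simp add: S_def B_Q_def)
    qed
    have bXp: "root_eval \<beta> (X p) = 0" if "X \<in> S" for X
      using coeff_eq_0[of "alpha_poly \<beta> p X" p] Schar2[of X] that dp p1 by (simp add: coeff_alpha_poly)
    show ?thesis
    proof (cases "d = 0")
      case True
      have Schar0: "X \<in> S \<longleftrightarrow> (\<forall>i. i \<notin> {1..p} \<longrightarrow> X i = 0) \<and> X p \<noteq> 0 \<and>
                     (\<forall>i. 1 \<le> i \<and> i \<le> p \<longrightarrow> root_eval \<beta> (X i) = 0)" for X
      proof -
        have "degree (alpha_poly \<beta> p X) = 0 \<longleftrightarrow> (\<forall>i. 1 \<le> i \<and> i \<le> p \<longrightarrow> root_eval \<beta> (X i) = 0)"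
          unfolding deg0_iff coeff_alpha_poly by auto
        then show ?thesis using Schar2[of X] True by simp
      qed
      define F where "F X = root_eval lr (X p) / c0" for X :: "nat \<Rightarrow> complex \<times> complex"
      define G where "G z = A(p := cmul z (A p))" for z
      define T :: "complex set" where "T = -{0}"
      have FA: "F A = 1" using c0 by (simp add: F_def c0_def)
      have c1: "continuous_on S F" unfolding F_def
        by (intro continuous_on_divide cont_re_coord continuous_on_const) (use c0 in simp)
      have c2: "F \<in> S \<rightarrow> T"
      proof
        fix X assume "X \<in> S"
        then have "root_eval lr (X p) \<noteq> 0" using KI0 bXp Schar0 by blast
        then show "F X \<in> T" using c0 by (simp add: F_def T_def)
      qed
      have c3: "continuous_on T G" unfolding G_def
      proof (rule continuous_on_coordinatewise_then_product)
        fix i show "continuous_on T (\<lambda>z. (A(p := cmul z (A p))) i)"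
          by (cases "i = p") (simp_all add: cont_cmul continuous_on_const)
      qed
      have AS0: "\<forall>i. 1 \<le> i \<and> i \<le> p \<longrightarrow> root_eval \<beta> (A i) = 0" using Schar0 AS by blast
      have c4: "G \<in> T \<rightarrow> S"
      proof
        fix z assume z: "z \<in> T"
        have "G z p \<noteq> 0" using z Ap cmul_nz by (simp add: G_def T_def)
        moreover have "\<forall>i. i \<notin> {1..p} \<longrightarrow> G z i = 0" using suppA p1 by (auto simp: G_def)
        moreover have "\<forall>i. 1 \<le> i \<and> i \<le> p \<longrightarrow> root_eval \<beta> (G z i) = 0"
          using AS0 \<beta>(2) by (auto simp: G_def re_cmul)
        ultimately show "G z \<in> S" using Schar0 by blast
      qed
      have c5: "\<And>y. y \<in> T \<Longrightarrow> F (G y) = y" using c0 by (simp add: F_def G_def re_cmul c0_def)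
      have c6: "G (F A) = A" by (simp add: FA G_def)
      have c7: "(\<lambda>i. (1-s) *\<^sub>R X i + s *\<^sub>R G (F X) i) \<in> S" if X: "X \<in> S" and s: "s \<in> {0..1}" for X s
      proof -
        have Z: "G (F X) \<in> S" using c2 c4 X by blast
        have "G (F X) p = X p"
        proof (rule KI)
          show "root_eval \<beta> (G (F X) p) = 0" using \<beta>(2) by (simp add: G_def re_cmul)
          show "root_eval \<beta> (X p) = 0" using bXp[OF X] .
          show "root_eval lr (G (F X) p) = root_eval lr (X p)"
            using c0 by (simp add: G_def F_def re_cmul c0_def)
        qed
        then have "(\<lambda>i. (1-s) *\<^sub>R X i + s *\<^sub>R G (F X) i) p = X p"
          by (simp add: scaleR_left_distrib[symmetric])
        moreover have "(\<lambda>i. (1-s) *\<^sub>R X i + s *\<^sub>R G (F X) i) i = 0" if "i \<notin> {1..p}" for i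
        proof -
          have "X i = 0" "G (F X) i = 0" using that X Z Schar0 by blast+
          then show ?thesis by simp
        qed
        moreover have "root_eval \<beta> ((\<lambda>i. (1-s) *\<^sub>R X i + s *\<^sub>R G (F X) i) i) = 0"
          if "1 \<le> i \<and> i \<le> p" for i
        proof -
          have "root_eval \<beta> (X i) = 0" "root_eval \<beta> (G (F X) i) = 0" using that X Z Schar0 by blast+
          then show ?thesis by (simp add: re_add re_scaleR)
        qed
        ultimately show ?thesis using Schar0 X by auto
      qed
      have c8: "\<And>\<gamma>. \<gamma> \<in> loops_at T (F A) \<Longrightarrow> wn \<gamma> \<in> carrier integer_group" by simp
      have c9: "\<And>\<gamma>1 \<gamma>2. \<gamma>1 \<in> loops_at T (F A) \<Longrightarrow> \<gamma>2 \<in> loops_at T (F A) \<Longrightarrow>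
               homotopic_paths T \<gamma>1 \<gamma>2 \<longleftrightarrow> wn \<gamma>1 = wn \<gamma>2"
        unfolding T_def by (rule wn_hiff)
      have c10: "\<And>\<gamma>1 \<gamma>2. \<gamma>1 \<in> loops_at T (F A) \<Longrightarrow> \<gamma>2 \<in> loops_at T (F A) \<Longrightarrow>
               wn (\<gamma>1 +++ \<gamma>2) = wn \<gamma>1 \<otimes>\<^bsub>integer_group\<^esub> wn \<gamma>2"
        unfolding T_def by (simp add: wn_mult integer_group_def)
      have c11: "\<And>h. h \<in> carrier integer_group \<Longrightarrow> \<exists>\<gamma>\<in>loops_at T (F A). wn \<gamma> = h"
        unfolding T_def FA using exists_loop by blast
      have "fundamental_group S A \<cong> integer_group"
        by (rule transfer_iso[OF c1 c2 c3 c4 c5 c6 c7 c8 c9 c10 c11])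
      then show ?thesis using GQ by simp
    next
      case False
      then have d1: "1 \<le> d" and dnp: "d \<noteq> p" using dp by auto
      have Schar1: "X \<in> S \<longleftrightarrow> (\<forall>i. i \<notin> {1..p} \<longrightarrow> X i = 0) \<and> X p \<noteq> 0 \<and> root_eval \<beta> (X d) \<noteq> 0 \<and>
                     (\<forall>i. d < i \<and> i \<le> p \<longrightarrow> root_eval \<beta> (X i) = 0)" for X
      proof -
        have "degree (alpha_poly \<beta> p X) = d \<longleftrightarrow>
              root_eval \<beta> (X d) \<noteq> 0 \<and> (\<forall>i. d < i \<and> i \<le> p \<longrightarrow> root_eval \<beta> (X i) = 0)"
          unfolding degd_iff[OF d1] coeff_alpha_poly using d1 dp by auto
        then show ?thesis using Schar2[of X] by simp
      qed
      define e0 where "e0 = root_eval \<beta> (A d)"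
      have e0: "e0 \<noteq> 0" using Schar1 AS by (simp add: e0_def)
      define F where "F X = (root_eval lr (X p) / c0, root_eval \<beta> (X d) / e0)" for X :: "nat \<Rightarrow> complex \<times> complex"
      define G where "G y = A(p := cmul (fst y) (A p), d := cmul (snd y) (A d))" for y :: "complex \<times> complex"
      define T :: "(complex \<times> complex) set" where "T = (-{0}) \<times> (-{0})"
      have FA: "F A = (1,1)" using c0 e0 by (simp add: F_def c0_def e0_def)
      have Gp: "G y p = cmul (fst y) (A p)" for y using dnp by (simp add: G_def)
      have Gd: "G y d = cmul (snd y) (A d)" for y by (simp add: G_def)
      have Go: "G y i = A i" if "i \<noteq> p" "i \<noteq> d" for y i using that by (simp add: G_def)
      have c1: "continuous_on S F" unfolding F_def
        by (intro continuous_on_Pair continuous_on_divide cont_re_coord continuous_on_const) (use c0 e0 in simp_all)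
      have c2: "F \<in> S \<rightarrow> T"
      proof
        fix X assume X: "X \<in> S"
        then have "root_eval lr (X p) \<noteq> 0" using KI0 bXp Schar1 by blast
        moreover have "root_eval \<beta> (X d) \<noteq> 0" using X Schar1 by blast
        ultimately show "F X \<in> T" using c0 e0 by (simp add: F_def T_def)
      qed
      have c3: "continuous_on T G" unfolding G_def
      proof (rule continuous_on_coordinatewise_then_product)
        fix i
        have cf: "continuous_on T (\<lambda>y. cmul (fst y) (A p))" unfolding cmul_def
          by (intro continuous_on_Pair continuous_on_mult continuous_on_fst continuous_on_id continuous_on_const)
        have cs: "continuous_on T (\<lambda>y. cmul (snd y) (A d))" unfolding cmul_def
          by (intro continuous_on_Pair continuous_on_mult continuous_on_snd continuous_on_id continuous_on_const)
        show "continuous_on T (\<lambda>y. (A(p := cmul (fst y) (A p), d := cmul (snd y) (A d))) i)"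
          using cf cs dnp by (cases "i = d"; cases "i = p") (simp_all add: continuous_on_const)
      qed
      have dS: "d \<in> {1..p}" using d1 dp by simp
      have AS1: "\<forall>i. d < i \<and> i \<le> p \<longrightarrow> root_eval \<beta> (A i) = 0" using Schar1 AS by blast
      have c4: "G \<in> T \<rightarrow> S"
      proof
        fix y assume y: "y \<in> T"
        have "fst y \<noteq> 0" using y by (auto simp: T_def)
        then have "G y p \<noteq> 0" using Ap by (simp add: Gp cmul_nz)
        moreover have "\<forall>i. i \<notin> {1..p} \<longrightarrow> G y i = 0"
        proof (intro allI impI)
          fix i assume "i \<notin> {1..p}"
          then show "G y i = 0" using suppA p1 dS Go[of i y] by auto
        qed
        moreover have "root_eval \<beta> (G y d) \<noteq> 0" using y e0 by (auto simp: Gd re_cmul T_def e0_def)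
        moreover have "\<forall>i. d < i \<and> i \<le> p \<longrightarrow> root_eval \<beta> (G y i) = 0"
        proof (intro allI impI)
          fix i assume i: "d < i \<and> i \<le> p"
          show "root_eval \<beta> (G y i) = 0"
          proof (cases "i = p")
            case True then show ?thesis using \<beta>(2) by (simp add: Gp re_cmul)
          next
            case False then show ?thesis using i AS1 Go[of i y] by simp
          qed
        qed
        ultimately show "G y \<in> S" using Schar1 by blast
      qed
      have c5: "\<And>y. y \<in> T \<Longrightarrow> F (G y) = y" using c0 e0 by (simp add: F_def Gp Gd re_cmul c0_def e0_def)
      have c6: "G (F A) = A" by (simp add: FA G_def)
      have c7: "(\<lambda>i. (1-s) *\<^sub>R X i + s *\<^sub>R G (F X) i) \<in> S" if X: "X \<in> S" and s: "s \<in> {0..1}" for X s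
      proof -
        have Z: "G (F X) \<in> S" using c2 c4 X by blast
        have Zp: "G (F X) p = X p"
        proof (rule KI)
          show "root_eval \<beta> (G (F X) p) = 0" using \<beta>(2) by (simp add: Gp re_cmul)
          show "root_eval \<beta> (X p) = 0" using bXp[OF X] .
          show "root_eval lr (G (F X) p) = root_eval lr (X p)"
            using c0 by (simp add: Gp F_def re_cmul c0_def)
        qed
        have Zd: "root_eval \<beta> (G (F X) d) = root_eval \<beta> (X d)"
          using e0 by (simp add: Gd F_def re_cmul e0_def)
        let ?Y = "\<lambda>i. (1-s) *\<^sub>R X i + s *\<^sub>R G (F X) i"
        have "?Y p = X p" using Zp by (simp add: scaleR_left_distrib[symmetric])
        moreover have "?Y i = 0" if "i \<notin> {1..p}" for i
        proof -
          have "X i = 0" "G (F X) i = 0" using that X Z Schar1 by blast+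
          then show ?thesis by simp
        qed
        moreover have "root_eval \<beta> (?Y d) = root_eval \<beta> (X d)"
        proof -
          have "root_eval \<beta> (?Y d) = of_real (1-s) * root_eval \<beta> (X d) + of_real s * root_eval \<beta> (G (F X) d)"
            by (simp only: re_add re_scaleR)
          also have "\<dots> = root_eval \<beta> (X d)" using Zd by (simp add: algebra_simps)
          finally show ?thesis .
        qed
        moreover have "root_eval \<beta> (?Y i) = 0" if "d < i \<and> i \<le> p" for i
        proof -
          have "root_eval \<beta> (X i) = 0" "root_eval \<beta> (G (F X) i) = 0" using that X Z Schar1 by blast+
          then show ?thesis by (simp add: re_add re_scaleR)
        qed
        ultimately show ?thesis using Schar1 X by auto
      qed
      have c8: "\<And>\<gamma>. \<gamma> \<in> loops_at T (F A) \<Longrightarrow>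
                 (wn (fst \<circ> \<gamma>), wn (snd \<circ> \<gamma>)) \<in> carrier (DirProd integer_group integer_group)"
        by (simp add: DirProd_def)
      have c9: "\<And>\<gamma>1 \<gamma>2. \<gamma>1 \<in> loops_at T (F A) \<Longrightarrow> \<gamma>2 \<in> loops_at T (F A) \<Longrightarrow>
               homotopic_paths T \<gamma>1 \<gamma>2 \<longleftrightarrow> (wn (fst \<circ> \<gamma>1), wn (snd \<circ> \<gamma>1)) = (wn (fst \<circ> \<gamma>2), wn (snd \<circ> \<gamma>2))"
        unfolding T_def FA by (rule Cstar2_hiff)
      have c10: "\<And>\<gamma>1 \<gamma>2. \<gamma>1 \<in> loops_at T (F A) \<Longrightarrow> \<gamma>2 \<in> loops_at T (F A) \<Longrightarrow>
               (wn (fst \<circ> (\<gamma>1 +++ \<gamma>2)), wn (snd \<circ> (\<gamma>1 +++ \<gamma>2))) =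
               (wn (fst \<circ> \<gamma>1), wn (snd \<circ> \<gamma>1)) \<otimes>\<^bsub>DirProd integer_group integer_group\<^esub> (wn (fst \<circ> \<gamma>2), wn (snd \<circ> \<gamma>2))"
        unfolding T_def FA by (rule Cstar2_mult)
      have c11: "\<And>h. h \<in> carrier (DirProd integer_group integer_group) \<Longrightarrow>
                  \<exists>\<gamma>\<in>loops_at T (F A). (wn (fst \<circ> \<gamma>), wn (snd \<circ> \<gamma>)) = h"
        unfolding T_def FA using Cstar2_surj by (metis surj_pair)
      have "fundamental_group S A \<cong> DirProd integer_group integer_group"
        by (rule transfer_iso[OF c1 c2 c3 c4 c5 c6 c7 c8 c9 c10 c11])
      then show ?thesis using GQ by simp
    qed
  qed
qed

end
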